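(* Let $\{\mathcal G,(\Gamma_0,\Gamma_1),(\widetilde\Gamma_0,\widetilde\Gamma_1)\}$ be a triple for the adjoint pair $\{S,\widetilde S\}$ satisfying (G), (D), (M), and assume $\rho(A_0)\neq\emptyset$ (equivalently $\rho(\widetilde A_0)\neq\emptyset$). Let $\gamma,\widetilde\gamma$ be the $\gamma$-fields and $M,\widetilde M$ the Weyl functions. Then for all $\lambda\in\rho(A_0)$ and $\mu\in\rho(\widetilde A_0)$: (i) $M(\lambda)$ and $\widetilde M(\mu)$ are operators in $\mathcal G$ with dense domains $\operatorname{dom}M(\lambda)=\operatorname{ran}\Gamma_0$, $\operatorname{dom}\widetilde M(\mu)=\operatorname{ran}\widetilde\Gamma_0$, and $\operatorname{ran}M(\lambda)\subset\operatorname{ran}\Gamma_1$, $\operatorname{ran}\widetilde M(\mu)\subset\operatorname{ran}\widetilde\Gamma_1$; (ii) $M(\lambda)\subset\widetilde M(\overline\lambda)^*$ and $\widetilde M(\overline\lambda)\subset M(\lambda)^*$, and $M(\lambda)-\widetilde M(\mu)^*=(\lambda-\overline\mu)\widetilde\gamma(\mu)^*\gamma(\lambda)$, $M(\lambda)^*-\widetilde M(\mu)=(\overline\lambda-\mu)\gamma(\lambda)^*\widetilde\gamma(\mu)$; (iii) for fixed $\lambda_0,\mu_0\in\rho(A_0)\cap\rho(\widetilde A_0)$, $M(\lambda)=\widetilde M(\lambda_0)^*+\widetilde\gamma(\lambda_0)^*(\lambda-\overline{\lambda_0})(I+(\lambda-\lambda_0)(A_0-\lambda)^{-1})\gamma(\lambda_0)$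 and $\widetilde M(\mu)=M(\mu_0)^*+\gamma(\mu_0)^*(\mu-\overline{\mu_0})(I+(\mu-\mu_0)(\widetilde A_0-\mu)^{-1})\widetilde\gamma(\mu_0)$, i.e. $M$ and $\widetilde M$ are the sum of a fixed closed (possibly unbounded) operator and a bounded holomorphic operator function.
   Context: Let $\mathfrak H$ be a separable Hilbert space. An adjoint pair $\{S,\widetilde S\}$ consists of densely defined closed operators $S,\widetilde S$ in $\mathfrak H$ with $(Sf,g)=(f,\widetilde Sg)$ for all $f\in\operatorname{dom}S$, $g\in\operatorname{dom}\widetilde S$. Fix operators $T\subset S^*$ and $\widetilde T\subset\widetilde S^*$ which are cores, i.e. $\overline T=S^*$ and $\overline{\widetilde T}=\widetilde S^*$. A triple $\{\mathcal G,(\Gamma_0,\Gamma_1),(\widetilde\Gamma_0,\widetilde\Gamma_1)\}$ for $\{S,\widetilde S\}$ consists of a Hilbert space $\mathcal G$ and linear maps $\Gamma_0,\Gamma_1:\operatorname{dom}T\to\mathcal G$, $\widetilde\Gamma_0,\widetilde\Gamma_1:\operatorname{dom}\widetilde T\to\mathcal G$. Put $A_0:=T\upharpoonright\ker\Gamma_0$ and $\widetilde A_0:=\widetilde T\upharpoonright\ker\widetilde\Gamma_0$. Conditions: (G) $(Tf,g)_{\mathfrak H}-(f,\widetilde Tg)_{\mathfrak H}=(\Gamma_1f,\widetilde\Gamma_0g)_{\mathcal G}-(\Gamma_0f,\widetilde\Gamma_1g)_{\mathcal G}$ for all $f\in\operatorname{dom}T$, $g\in\operatorname{dom}\widetilde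 T$; (D) $\operatorname{ran}\Gamma_0$ and $\operatorname{ran}\widetilde\Gamma_0$ are dense in $\mathcal G$; (M) $A_0^*=\widetilde A_0$ and $\widetilde A_0^*=A_0$. For $\lambda\in\rho(A_0)$ one has $\operatorname{dom}T=\ker\Gamma_0\dotplus\ker(T-\lambda)$, so $\Gamma_0\upharpoonright\ker(T-\lambda)$ is injective; similarly for $\widetilde T$. The $\gamma$-fields are $\gamma(\lambda):=(\Gamma_0\upharpoonright\ker(T-\lambda))^{-1}$, $\lambda\in\rho(A_0)$, and $\widetilde\gamma(\mu):=(\widetilde\Gamma_0\upharpoonright\ker(\widetilde T-\mu))^{-1}$, $\mu\in\rho(\widetilde A_0)$; the Weyl functions are $M(\lambda):=\Gamma_1\gamma(\lambda)$ and $\widetilde M(\mu):=\widetilde\Gamma_1\widetilde\gamma(\mu)$. *)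

theory Defs
  imports "HOL-Analysis.Analysis"
begin

text \<open>Complex Hilbert spaces: a complete complex normed space whose norm comes from
  a complex inner product ip (linear in the first, conjugate linear in the second argument).
  (Possibly unbounded) operators and linear relations are represented by their graphs.\<close>

class complex_vector = real_vector +
  fixes scaleC :: "complex \<Rightarrow> 'a \<Rightarrow> 'a" (infixr \<open>*\<^sub>C\<close> 75)
  assumes scaleC_add_right: "c *\<^sub>C (x + y) = c *\<^sub>C x + c *\<^sub>C y"
    and scaleC_add_left: "(b + c) *\<^sub>C x = b *\<^sub>C x + c *\<^sub>C x"
    and scaleC_scaleC: "b *\<^sub>C (c *\<^sub>C x) = (b * c) *\<^sub>C x"
    and scaleC_one: "1 *\<^sub>C x = x"
    and scaleR_scaleC: "scaleR r x = complex_of_real r *\<^sub>C x"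

class complex_normed_vector = complex_vector + real_normed_vector +
  assumes norm_scaleC: "norm (c *\<^sub>C x) = cmod c * norm x"

definition is_cinner :: "('a::complex_normed_vector \<Rightarrow> 'a \<Rightarrow> complex) \<Rightarrow> bool" where
  "is_cinner ip \<longleftrightarrow>
     (\<forall>x y z. ip (x + y) z = ip x z + ip y z) \<and>
     (\<forall>c x y. ip (c *\<^sub>C x) y = c * ip x y) \<and>
     (\<forall>x y. ip y x = cnj (ip x y)) \<and>
     (\<forall>x. ip x x = complex_of_real ((norm x)\<^sup>2))"

definition separable_type :: "'a::topological_space itself \<Rightarrow> bool" where
  "separable_type _ \<longleftrightarrow> (\<exists>D::'a set. countable D \<and> closure D = UNIV)"

definition csubspace :: "'a::complex_vector set \<Rightarrow> bool" where
  "csubspace V \<longleftrightarrow> 0 \<in> V \<and> (\<forall>x\<in>V. \<forall>y\<in>V. x + y \<in> V) \<and> (\<forall>c. \<forall>x\<in>V. c *\<^sub>C x \<in> V)"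

definition is_op :: "('a::complex_vector \<times> 'b::complex_vector) set \<Rightarrow> bool" where
  "is_op A \<longleftrightarrow> (0, 0) \<in> A \<and>
     (\<forall>x y u v. (x, y) \<in> A \<longrightarrow> (u, v) \<in> A \<longrightarrow> (x + u, y + v) \<in> A) \<and>
     (\<forall>c x y. (x, y) \<in> A \<longrightarrow> (c *\<^sub>C x, c *\<^sub>C y) \<in> A) \<and>
     single_valued A"

definition densely_defined :: "('a::topological_space \<times> 'b) set \<Rightarrow> bool" where
  "densely_defined A \<longleftrightarrow> closure (Domain A) = UNIV"

definition closed_op :: "('a::complex_normed_vector \<times> 'b::complex_normed_vector) set \<Rightarrow> bool" where
  "closed_op A \<longleftrightarrow> is_op A \<and> closed A"

definition adj :: "('a \<Rightarrow> 'a \<Rightarrow> complex) \<Rightarrow> ('b \<Rightarrow> 'b \<Rightarrow> complex) \<Rightarrow> ('a \<times> 'b) set \<Rightarrow> ('b \<times> 'a) set" where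
  "adj ipX ipY A = {(y, x). \<forall>(u, v)\<in>A. ipY v y = ipX u x}"

definition op_plus :: "('a \<times> 'b::complex_vector) set \<Rightarrow> ('a \<times> 'b) set \<Rightarrow> ('a \<times> 'b) set" where
  "op_plus A B = {(x, y + z) | x y z. (x, y) \<in> A \<and> (x, z) \<in> B}"

definition op_minus :: "('a \<times> 'b::complex_vector) set \<Rightarrow> ('a \<times> 'b) set \<Rightarrow> ('a \<times> 'b) set" where
  "op_minus A B = {(x, y - z) | x y z. (x, y) \<in> A \<and> (x, z) \<in> B}"

definition op_scale :: "complex \<Rightarrow> ('a \<times> 'b::complex_vector) set \<Rightarrow> ('a \<times> 'b) set" where
  "op_scale c A = {(x, c *\<^sub>C y) | x y. (x, y) \<in> A}"

definition op_comp :: "('b \<times> 'c) set \<Rightarrow> ('a \<times> 'b) set \<Rightarrow> ('a \<times> 'c) set" where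
  "op_comp B A = A O B"

definition op_id :: "('a \<times> 'a) set" where
  "op_id = {(x, x) | x. True}"

definition resolvent_op :: "('a::complex_vector \<times> 'a) set \<Rightarrow> complex \<Rightarrow> ('a \<times> 'a) set" where
  "resolvent_op A l = {(g - l *\<^sub>C f, f) | f g. (f, g) \<in> A}"

definition resolvent_set :: "('a::complex_normed_vector \<times> 'a) set \<Rightarrow> complex set" where
  "resolvent_set A = {l. single_valued (resolvent_op A l) \<and> Domain (resolvent_op A l) = UNIV \<and>
       (\<exists>C. \<forall>(x, y)\<in>resolvent_op A l. norm y \<le> C * norm x)}"

definition graph_on :: "'a set \<Rightarrow> ('a \<Rightarrow> 'b) \<Rightarrow> ('a \<times> 'b) set" where
  "graph_on D f = {(x, f x) | x. x \<in> D}"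

definition clinear_on :: "'a::complex_vector set \<Rightarrow> ('a \<Rightarrow> 'b::complex_vector) \<Rightarrow> bool" where
  "clinear_on D f \<longleftrightarrow> (\<forall>x\<in>D. \<forall>y\<in>D. f (x + y) = f x + f y) \<and> (\<forall>c. \<forall>x\<in>D. f (c *\<^sub>C x) = c *\<^sub>C f x)"

definition A0_of :: "('a \<times> 'a) set \<Rightarrow> ('a \<Rightarrow> 'g::zero) \<Rightarrow> ('a \<times> 'a) set" where
  "A0_of T \<Gamma>0 = {(f, g). (f, g) \<in> T \<and> \<Gamma>0 f = 0}"

definition gamma_field :: "('a::complex_vector \<times> 'a) set \<Rightarrow> ('a \<Rightarrow> 'g) \<Rightarrow> complex \<Rightarrow> ('g \<times> 'a) set" where
  "gamma_field T \<Gamma>0 l = converse (graph_on {f. (f, l *\<^sub>C f) \<in> T} \<Gamma>0)"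

definition weyl_function :: "('a::complex_vector \<times> 'a) set \<Rightarrow> ('a \<Rightarrow> 'g) \<Rightarrow> ('a \<Rightarrow> 'g) \<Rightarrow> complex \<Rightarrow> ('g \<times> 'g) set" where
  "weyl_function T \<Gamma>0 \<Gamma>1 l = op_comp (graph_on (Domain T) \<Gamma>1) (gamma_field T \<Gamma>0 l)"

end

theory Submission
  imports Defs
begin


lemma scaleC_zero_left[simp]: "(0::complex) *\<^sub>C (x::'a::complex_vector) = 0"
  using scaleR_scaleC[of 0 x] by simp

lemma scaleC_zero_right[simp]: "c *\<^sub>C (0::'a::complex_vector) = 0"
proof -
  have "c *\<^sub>C (0::'a) = c *\<^sub>C 0 + c *\<^sub>C 0" using scaleC_add_right[of c 0 0] by simp
  then show ?thesis by simp
qed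

lemma scaleC_one'[simp]: "1 *\<^sub>C x = x" by (rule scaleC_one)

lemma scaleC_minus1: "(-1) *\<^sub>C (x::'a::complex_vector) = - x"
  using scaleR_scaleC[of "-1" x] by simp

lemma scaleC_minus_left: "(- c) *\<^sub>C (x::'a::complex_vector) = - (c *\<^sub>C x)"
proof -
  have "(- c) *\<^sub>C x = (-1) *\<^sub>C (c *\<^sub>C x)" by (simp add: scaleC_scaleC)
  then show ?thesis by (simp add: scaleC_minus1)
qed

lemma scaleC_minus_right: "c *\<^sub>C (- x::'a::complex_vector) = - (c *\<^sub>C x)"
proof -
  have "c *\<^sub>C (- x) = c *\<^sub>C ((-1) *\<^sub>C x)" by (simp add: scaleC_minus1)
  also have "\<dots> = (-1) *\<^sub>C (c *\<^sub>C x)" by (simp add: scaleC_scaleC mult.commute)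
  finally show ?thesis by (simp add: scaleC_minus1)
qed

lemma scaleC_diff_right: "c *\<^sub>C (x - y::'a::complex_vector) = c *\<^sub>C x - c *\<^sub>C y"
  using scaleC_add_right[of c x "-y"] by (simp add: scaleC_minus_right)

lemma scaleC_diff_left: "(a - b) *\<^sub>C (x::'a::complex_vector) = a *\<^sub>C x - b *\<^sub>C x"
  using scaleC_add_left[of a "-b" x] by (simp add: scaleC_minus_left)

lemma scaleC_of_real: "complex_of_real r *\<^sub>C (x::'a::complex_vector) = r *\<^sub>R x"
  by (simp add: scaleR_scaleC)

lemma scaleC_eq_0_iff: "c *\<^sub>C (x::'a::complex_vector) = 0 \<longleftrightarrow> c = 0 \<or> x = 0"
proof
  assume h: "c *\<^sub>C x = 0"
  show "c = 0 \<or> x = 0"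
  proof (cases "c = 0")
    case False
    then have "x = inverse c *\<^sub>C (c *\<^sub>C x)" by (simp add: scaleC_scaleC)
    then show ?thesis using h by simp
  qed simp
qed auto

section \<open>Inner products\<close>

locale cip =
  fixes ip :: "'a::complex_normed_vector \<Rightarrow> 'a \<Rightarrow> complex"
  assumes ci: "is_cinner ip"
begin

lemma add_left: "ip (x + y) z = ip x z + ip y z" using ci unfolding is_cinner_def by blast
lemma scale_left: "ip (c *\<^sub>C x) y = c * ip x y" using ci unfolding is_cinner_def by blast
lemma sym: "ip y x = cnj (ip x y)" using ci unfolding is_cinner_def by blast
lemma self: "ip x x = complex_of_real ((norm x)\<^sup>2)" using ci unfolding is_cinner_def by blast

lemma add_right: "ip x (y + z) = ip x y + ip x z"
  by (metis add_left sym complex_cnj_add)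
lemma scale_right: "ip x (c *\<^sub>C y) = cnj c * ip x y"
  by (metis scale_left sym complex_cnj_mult complex_cnj_cnj)
lemma zero_left[simp]: "ip 0 y = 0"
  using scale_left[of 0 0 y] by simp
lemma zero_right[simp]: "ip x 0 = 0"
  using scale_right[of x 0 0] by simp
lemma minus_left: "ip (- x) y = - ip x y"
  using scale_left[of "-1" x y] by (simp add: scaleC_minus1)
lemma minus_right: "ip x (- y) = - ip x y"
  using scale_right[of x "-1" y] by (simp add: scaleC_minus1)
lemma diff_left: "ip (x - y) z = ip x z - ip y z"
  using add_left[of x "-y" z] by (simp add: minus_left)
lemma diff_right: "ip x (y - z) = ip x y - ip x z"
  using add_right[of x y "-z"] by (simp add: minus_right)
lemma self_zero: "ip x x = 0 \<longleftrightarrow> x = 0"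
  by (simp add: self)

lemma expand: "ip (x + t *\<^sub>C y) (x + t *\<^sub>C y) = ip x x + cnj t * ip x y + t * ip y x + t * cnj t * ip y y"
  by (simp add: add_left add_right scale_left scale_right algebra_simps)

lemma key:
  assumes "y \<noteq> 0"
  shows "(norm (x + (- ip x y / ip y y) *\<^sub>C y))\<^sup>2 = (norm x)\<^sup>2 - (cmod (ip x y))\<^sup>2 / (norm y)\<^sup>2"
proof -
  define a where "a = ip x y"
  define n where "n = (norm y)\<^sup>2"
  have n: "n > 0" using assms by (simp add: n_def)
  have yy: "ip y y = complex_of_real n" by (simp add: self n_def)
  have yx: "ip y x = cnj a" by (simp add: a_def sym[of x y])
  define t where "t = - a / complex_of_real n"
  have e: "ip (x + t *\<^sub>C y) (x + t *\<^sub>C y) = ip x x + cnj t * a + t * cnj a + t * cnj t * complex_of_real n"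
    using expand[of x t y] by (simp add: a_def yy yx[unfolded a_def])
  have e2: "ip x x + cnj t * a + t * cnj a + t * cnj t * complex_of_real n = ip x x - a * cnj a / complex_of_real n"
    using n unfolding t_def by (simp add: field_simps)
  have "complex_of_real ((norm (x + t *\<^sub>C y))\<^sup>2) = complex_of_real ((norm x)\<^sup>2 - (cmod a)\<^sup>2 / n)"
  proof -
    have "a * cnj a = complex_of_real ((cmod a)\<^sup>2)" by (rule complex_norm_square[symmetric])
    then show ?thesis unfolding self[symmetric] e e2 by (simp add: self)
  qed
  then have "(norm (x + t *\<^sub>C y))\<^sup>2 = (norm x)\<^sup>2 - (cmod a)\<^sup>2 / n" using of_real_eq_iff by blast
  then show ?thesis unfolding t_def a_def n_def by (simp add: self)
qed

lemma cauchy_schwarz: "cmod (ip x y) \<le> norm x * norm y"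
proof (cases "y = 0")
  case False
  have "0 \<le> (norm x)\<^sup>2 - (cmod (ip x y))\<^sup>2 / (norm y)\<^sup>2"
    using key[OF False, of x] by (metis zero_le_power2)
  then have "(cmod (ip x y))\<^sup>2 \<le> (norm x * norm y)\<^sup>2"
    using False by (simp add: field_simps power_mult_distrib)
  then show ?thesis by (simp add: power_mono_iff abs_le_square_iff)
qed simp

lemma bl_left: "bounded_linear (\<lambda>x. ip x z)"
proof
  show "ip (x + y) z = ip x z + ip y z" for x y by (rule add_left)
  show "ip (r *\<^sub>R x) z = r *\<^sub>R ip x z" for r x
    by (simp add: scaleR_scaleC scale_left scaleR_conv_of_real)
  show "\<exists>K. \<forall>x. norm (ip x z) \<le> norm x * K"
    using cauchy_schwarz by blast
qed

lemma dense_zero: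
  assumes "closure D = UNIV" "\<forall>d\<in>D. ip d z = 0"
  shows "z = 0"
proof -
  have "closed {d. ip d z = 0}"
    by (intro closed_Collect_eq continuous_on_const linear_continuous_on bl_left)
  moreover have "D \<subseteq> {d. ip d z = 0}" using assms(2) by auto
  ultimately have "closure D \<subseteq> {d. ip d z = 0}" by (rule closure_minimal[rotated])
  then have "ip z z = 0" using assms(1) by auto
  then show ?thesis by (simp add: self_zero)
qed

lemma parallelogram: "(norm (x + y::'a))\<^sup>2 + (norm (x - y))\<^sup>2 = 2 * (norm x)\<^sup>2 + 2 * (norm y)\<^sup>2"
proof -
  have "ip (x + y) (x + y) + ip (x - y) (x - y) = 2 * ip x x + 2 * ip y y"
    by (simp add: add_left add_right diff_left diff_right)
  then have "complex_of_real ((norm (x + y))\<^sup>2 + (norm (x - y))\<^sup>2) = complex_of_real (2 * (norm x)\<^sup>2 + 2 * (norm y)\<^sup>2)"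
    by (simp add: self)
  then show ?thesis using of_real_eq_iff by blast
qed

end


locale chip = cip ip for ip :: "'a::{complex_normed_vector,complete_space} \<Rightarrow> 'a \<Rightarrow> complex"
begin

lemma riesz:
  assumes Fadd: "\<And>x y. F (x + y) = F x + F y" and Fscale: "\<And>c x. F (c *\<^sub>C x) = c * F x"
    and Fb: "\<And>x. cmod (F x) \<le> C * norm x"
  shows "\<exists>k. \<forall>x. F x = ip x k"
proof -
  have blF: "bounded_linear F"
  proof
    show "F (x + y) = F x + F y" for x y by (rule Fadd)
    show "F (r *\<^sub>R x) = r *\<^sub>R F x" for r x
      by (simp add: scaleR_scaleC Fscale scaleR_conv_of_real)
    show "\<exists>K. \<forall>x. norm (F x) \<le> norm x * K"
      using Fb by (metis mult.commute norm_complex_def)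
  qed
  have F0: "F 0 = 0" using Fscale[of 0 0] by simp
  have Fdiff: "F (x - y) = F x - F y" for x y using linear_diff[OF bounded_linear.linear[OF blF]] by blast
  show ?thesis
  proof (cases "\<forall>x. F x = 0")
    case True
    then show ?thesis by (intro exI[of _ 0]) simp
  next
    case False
    then obtain x0 where x0: "F x0 \<noteq> 0" by blast
    define K where "K = {x. F x = 1}"
    have x1K: "(1 / F x0) *\<^sub>C x0 \<in> K" using x0 by (simp add: K_def Fscale)
    define d2 where "d2 = Inf ((\<lambda>x. (norm x)\<^sup>2) ` K)"
    have bdd: "bdd_below ((\<lambda>x. (norm x)\<^sup>2) ` K)"
      by (rule bdd_belowI[of _ 0]) auto
    have lower: "x \<in> K \<Longrightarrow> d2 \<le> (norm x)\<^sup>2" for x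
      unfolding d2_def by (rule cInf_lower[OF _ bdd]) auto
    have "\<forall>n. \<exists>x\<in>K. (norm x)\<^sup>2 < d2 + inverse (real (Suc n))"
    proof
      fix n
      have "Inf ((\<lambda>x. (norm x)\<^sup>2) ` K) < d2 + inverse (real (Suc n))"
        unfolding d2_def[symmetric] by simp
      then obtain v where "v \<in> (\<lambda>x. (norm x)\<^sup>2) ` K" "v < d2 + inverse (real (Suc n))"
        using cInf_lessD[of "(\<lambda>x. (norm x)\<^sup>2) ` K"] x1K by blast
      then show "\<exists>x\<in>K. (norm x)\<^sup>2 < d2 + inverse (real (Suc n))" by blast
    qed
    then obtain xs where xsK: "\<And>n. xs n \<in> K" and xsn: "\<And>n. (norm (xs n))\<^sup>2 < d2 + inverse (real (Suc n))"
      by metis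
    have cb: "(norm (xs n - xs m))\<^sup>2 \<le> 2 * inverse (real (Suc n)) + 2 * inverse (real (Suc m))" for n m
    proof -
      have "(1/2::real) *\<^sub>R (xs n + xs m) \<in> K"
        using xsK[of n] xsK[of m] unfolding K_def
        by (simp add: linear_scale[OF bounded_linear.linear[OF blF]] Fadd scaleR_conv_of_real)
      then have "d2 \<le> (norm ((1/2::real) *\<^sub>R (xs n + xs m)))\<^sup>2" by (rule lower)
      also have "\<dots> = (norm (xs n + xs m))\<^sup>2 / 4" by (simp add: power2_eq_square)
      finally have "4 * d2 \<le> (norm (xs n + xs m))\<^sup>2" by simp
      moreover have "(norm (xs n + xs m))\<^sup>2 + (norm (xs n - xs m))\<^sup>2 = 2 * (norm (xs n))\<^sup>2 + 2 * (norm (xs m))\<^sup>2"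
        by (rule parallelogram)
      ultimately show ?thesis using xsn[of n] xsn[of m] by linarith
    qed
    have "Cauchy xs"
      unfolding Cauchy_def
    proof (intro allI impI)
      fix e :: real assume e: "e > 0"
      obtain M where M: "4 / e\<^sup>2 < real M" using reals_Archimedean2 by blast
      have "4 / real (Suc M) < e\<^sup>2"
      proof -
        have "4 < real M * e\<^sup>2" using M e by (simp add: field_simps)
        then have "4 < real (Suc M) * e\<^sup>2" using e
          by (smt (verit) of_nat_Suc mult_right_mono zero_le_power2 distrib_right)
        then show ?thesis by (simp add: field_simps)
      qed
      show "\<exists>M. \<forall>m\<ge>M. \<forall>n\<ge>M. dist (xs m) (xs n) < e"
      proof (intro exI[of _ M] allI impI)
        fix m n assume mn: "M \<le> m" "M \<le> n"
        have "inverse (real (Suc m)) \<le> inverse (real (Suc M))" "inverse (real (Suc n)) \<le> inverse (real (Suc M))"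
          using mn by (simp_all add: le_imp_inverse_le)
        then have "(norm (xs m - xs n))\<^sup>2 < e\<^sup>2"
          using cb[of m n] \<open>4 / real (Suc M) < e\<^sup>2\<close> unfolding divide_inverse by linarith
        then have "norm (xs m - xs n) < e" using e by (simp add: power_less_imp_less_base)
        then show "dist (xs m) (xs n) < e" by (simp add: dist_norm)
      qed
    qed
    then obtain z where lim: "xs \<longlonglongrightarrow> z" using Cauchy_convergent_iff convergent_def by blast
    have "closed K" unfolding K_def
      by (intro closed_Collect_eq continuous_on_const linear_continuous_on blF)
    then have zK: "z \<in> K" using closed_sequentially xsK lim by blast
    have "(\<lambda>n. (norm (xs n))\<^sup>2) \<longlonglongrightarrow> (norm z)\<^sup>2" by (intro tendsto_intros lim)
    moreover have "(\<lambda>n. d2 + inverse (real (Suc n))) \<longlonglongrightarrow> d2 + 0"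
      by (intro tendsto_intros LIMSEQ_inverse_real_of_nat)
    ultimately have "(norm z)\<^sup>2 \<le> d2 + 0"
      by (rule LIMSEQ_le) (use xsn less_imp_le in blast)
    then have minimal: "x \<in> K \<Longrightarrow> (norm z)\<^sup>2 \<le> (norm x)\<^sup>2" for x using lower[of x] by linarith
    have orth: "F w = 0 \<Longrightarrow> ip w z = 0" for w
    proof (cases "w = 0")
      case False
      assume Fw: "F w = 0"
      have "z + (- ip z w / ip w w) *\<^sub>C w \<in> K" using zK Fw by (simp add: K_def Fadd Fscale)
      then have "(norm z)\<^sup>2 \<le> (norm z)\<^sup>2 - (cmod (ip z w))\<^sup>2 / (norm w)\<^sup>2"
        using minimal key[OF False, of z] by metis
      then have "(cmod (ip z w))\<^sup>2 / (norm w)\<^sup>2 \<le> 0" by simp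
      then have "(cmod (ip z w))\<^sup>2 \<le> 0" using False by (simp add: divide_le_0_iff)
      then have "ip z w = 0" by simp
      then show ?thesis by (simp add: sym[of z w])
    qed simp
    have Fz: "F z = 1" using zK by (simp add: K_def)
    then have z0: "z \<noteq> 0" using F0 by auto
    define k where "k = complex_of_real (1 / (norm z)\<^sup>2) *\<^sub>C z"
    show ?thesis
    proof (intro exI[of _ k] allI)
      fix w
      have "F (w - F w *\<^sub>C z) = 0" by (simp add: Fdiff Fscale Fz)
      then have "ip (w - F w *\<^sub>C z) z = 0" by (rule orth)
      then have "ip w z = F w * complex_of_real ((norm z)\<^sup>2)"
        by (simp add: diff_left scale_left self)
      then show "F w = ip w k" unfolding k_def scale_right using z0 by simp
    qed
  qed
qed

end



lemma gamma_mem: "(p, f) \<in> gamma_field T G0 l \<longleftrightarrow> (f, l *\<^sub>C f) \<in> T \<and> p = G0 f"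
  unfolding gamma_field_def graph_on_def by auto

lemma weyl_mem: "(p, x) \<in> weyl_function T G0 G1 l \<longleftrightarrow> (\<exists>f. (f, l *\<^sub>C f) \<in> T \<and> p = G0 f \<and> x = G1 f)"
  unfolding weyl_function_def op_comp_def gamma_field_def graph_on_def by auto

lemma adj_mem: "(y, x) \<in> adj ipX ipY A \<longleftrightarrow> (\<forall>u v. (u, v) \<in> A \<longrightarrow> ipY v y = ipX u x)"
  unfolding adj_def by auto

lemma A0_mem: "(f, g) \<in> A0_of T G0 \<longleftrightarrow> (f, g) \<in> T \<and> G0 f = 0"
  unfolding A0_of_def by auto

lemma res_mem: "(w, h) \<in> resolvent_op A l \<longleftrightarrow> (h, w + l *\<^sub>C h) \<in> A"
  unfolding resolvent_op_def by force

lemma scaleC_comm: "a *\<^sub>C (b *\<^sub>C x) = b *\<^sub>C (a *\<^sub>C (x::'a::complex_vector))"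
  by (simp add: scaleC_scaleC mult.commute)

locale lop =
  fixes T :: "('a::complex_vector \<times> 'a) set"
  assumes T: "is_op T"
begin

lemma zero: "(0, 0) \<in> T" using T unfolding is_op_def by blast
lemma add: "(x, y) \<in> T \<Longrightarrow> (u, v) \<in> T \<Longrightarrow> (x + u, y + v) \<in> T" using T unfolding is_op_def by blast
lemma scale: "(x, y) \<in> T \<Longrightarrow> (c *\<^sub>C x, c *\<^sub>C y) \<in> T" using T unfolding is_op_def by blast
lemma sv: "(x, y) \<in> T \<Longrightarrow> (x, z) \<in> T \<Longrightarrow> y = z" using T unfolding is_op_def single_valued_def by blast
lemma minus: "(x, y) \<in> T \<Longrightarrow> (- x, - y) \<in> T" using scale[of x y "-1"] by (simp add: scaleC_minus1)
lemma diff: "(x, y) \<in> T \<Longrightarrow> (u, v) \<in> T \<Longrightarrow> (x - u, y - v) \<in> T"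
  using add[of x y "-u" "-v"] minus[of u v] by simp

lemma ev_add: "(f, l *\<^sub>C f) \<in> T \<Longrightarrow> (g, l *\<^sub>C g) \<in> T \<Longrightarrow> (f + g, l *\<^sub>C (f + g)) \<in> T"
  using add by (simp add: scaleC_add_right)
lemma ev_diff: "(f, l *\<^sub>C f) \<in> T \<Longrightarrow> (g, l *\<^sub>C g) \<in> T \<Longrightarrow> (f - g, l *\<^sub>C (f - g)) \<in> T"
  using diff by (simp add: scaleC_diff_right)
lemma ev_scale: "(f, l *\<^sub>C f) \<in> T \<Longrightarrow> (c *\<^sub>C f, l *\<^sub>C (c *\<^sub>C f)) \<in> T"
  using scale[of f "l *\<^sub>C f" c] by (simp add: scaleC_comm)

lemma lin_diff:
  assumes "clinear_on (Domain T) G" "x \<in> Domain T" "y \<in> Domain T"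
  shows "G (x - y) = G x - G y"
proof -
  have my: "(-1) *\<^sub>C y \<in> Domain T" using assms(3) scale by blast
  have "G (x + (-1) *\<^sub>C y) = G x + G ((-1) *\<^sub>C y)" using assms my unfolding clinear_on_def by blast
  also have "G ((-1) *\<^sub>C y) = (-1) *\<^sub>C G y" using assms unfolding clinear_on_def by blast
  finally show ?thesis by (simp add: scaleC_minus1)
qed

lemma lin_add:
  assumes "clinear_on (Domain T) G" "x \<in> Domain T" "y \<in> Domain T"
  shows "G (x + y) = G x + G y" using assms unfolding clinear_on_def by blast

lemma lin_scale:
  assumes "clinear_on (Domain T) G" "x \<in> Domain T"
  shows "G (c *\<^sub>C x) = c *\<^sub>C G x" using assms unfolding clinear_on_def by blast

lemma lin_zero:
  assumes "clinear_on (Domain T) G"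
  shows "G 0 = 0"
  using lin_scale[OF assms, of 0 0] zero by auto

end

locale wtrip = lop T for T :: "('a::complex_normed_vector \<times> 'a) set" +
  fixes G0 G1 :: "'a \<Rightarrow> 'g::complex_normed_vector"
  assumes lin0: "clinear_on (Domain T) G0" and lin1: "clinear_on (Domain T) G1"
begin

lemma ev_inj:
  assumes l: "l \<in> resolvent_set (A0_of T G0)"
    and f: "(f, l *\<^sub>C f) \<in> T" and g: "(g, l *\<^sub>C g) \<in> T" and e: "G0 f = G0 g"
  shows "f = g"
proof -
  have d: "(f - g, l *\<^sub>C (f - g)) \<in> T" by (rule ev_diff[OF f g])
  have "G0 (f - g) = 0" using lin_diff[OF lin0, of f g] f g e by force
  then have "(0, f - g) \<in> resolvent_op (A0_of T G0) l" using d by (simp add: res_mem A0_mem)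
  moreover have "(0, 0) \<in> resolvent_op (A0_of T G0) l" using zero lin_zero[OF lin0]
    by (simp add: res_mem A0_mem)
  moreover have "single_valued (resolvent_op (A0_of T G0) l)" using l unfolding resolvent_set_def by blast
  ultimately have "f - g = 0" unfolding single_valued_def by blast
  then show ?thesis by simp
qed

lemma decomp:
  assumes l: "l \<in> resolvent_set (A0_of T G0)" and fv: "(f, v) \<in> T"
  shows "\<exists>f'. (f', l *\<^sub>C f') \<in> T \<and> G0 f' = G0 f"
proof -
  have "Domain (resolvent_op (A0_of T G0) l) = UNIV" using l unfolding resolvent_set_def by blast
  then obtain h where "(v - l *\<^sub>C f, h) \<in> resolvent_op (A0_of T G0) l" by blast
  then have h: "(h, v - l *\<^sub>C f + l *\<^sub>C h) \<in> T" "G0 h = 0" by (auto simp: res_mem A0_mem)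
  have "(f - h, v - (v - l *\<^sub>C f + l *\<^sub>C h)) \<in> T" by (rule diff[OF fv h(1)])
  then have "(f - h, l *\<^sub>C (f - h)) \<in> T" by (simp add: scaleC_diff_right)
  moreover have "G0 (f - h) = G0 f" using lin_diff[OF lin0, of f h] fv h by force
  ultimately show ?thesis by blast
qed

lemma weyl_i:
  assumes l: "l \<in> resolvent_set (A0_of T G0)" and D: "closure (G0 ` Domain T) = UNIV"
  shows "is_op (weyl_function T G0 G1 l) \<and> Domain (weyl_function T G0 G1 l) = G0 ` Domain T \<and>
         densely_defined (weyl_function T G0 G1 l) \<and> Range (weyl_function T G0 G1 l) \<subseteq> G1 ` Domain T"
proof -
  let ?M = "weyl_function T G0 G1 l"
  have dom: "Domain ?M = G0 ` Domain T"
  proof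
    show "Domain ?M \<subseteq> G0 ` Domain T" by (force simp: weyl_mem)
    show "G0 ` Domain T \<subseteq> Domain ?M"
    proof
      fix p assume "p \<in> G0 ` Domain T"
      then obtain f v where "(f, v) \<in> T" "p = G0 f" by blast
      then obtain f' where "(f', l *\<^sub>C f') \<in> T" "G0 f' = p" using decomp[OF l] by metis
      then have "(p, G1 f') \<in> ?M" by (auto simp: weyl_mem)
      then show "p \<in> Domain ?M" by blast
    qed
  qed
  have op: "is_op ?M"
    unfolding is_op_def
  proof (intro conjI allI impI)
    show "(0, 0) \<in> ?M" using zero lin_zero[OF lin0] lin_zero[OF lin1] by (force simp: weyl_mem)
  next
    fix x y u v assume "(x, y) \<in> ?M" "(u, v) \<in> ?M"
    then obtain f g where f: "(f, l *\<^sub>C f) \<in> T" "x = G0 f" "y = G1 f"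
      and g: "(g, l *\<^sub>C g) \<in> T" "u = G0 g" "v = G1 g" by (auto simp: weyl_mem)
    have "(f + g, l *\<^sub>C (f + g)) \<in> T" by (rule ev_add[OF f(1) g(1)])
    moreover have "G0 (f + g) = x + u" "G1 (f + g) = y + v"
      using lin_add[OF lin0, of f g] lin_add[OF lin1, of f g] f g by force+
    ultimately show "(x + u, y + v) \<in> ?M" by (force simp: weyl_mem)
  next
    fix c x y assume "(x, y) \<in> ?M"
    then obtain f where f: "(f, l *\<^sub>C f) \<in> T" "x = G0 f" "y = G1 f" by (auto simp: weyl_mem)
    have "(c *\<^sub>C f, l *\<^sub>C (c *\<^sub>C f)) \<in> T" by (rule ev_scale[OF f(1)])
    moreover have "G0 (c *\<^sub>C f) = c *\<^sub>C x" "G1 (c *\<^sub>C f) = c *\<^sub>C y"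
      using lin_scale[OF lin0, of f c] lin_scale[OF lin1, of f c] f by force+
    ultimately show "(c *\<^sub>C x, c *\<^sub>C y) \<in> ?M" by (force simp: weyl_mem)
  next
    show "single_valued ?M"
    proof (rule single_valuedI)
      fix x y z assume "(x, y) \<in> ?M" "(x, z) \<in> ?M"
      then obtain f g where f: "(f, l *\<^sub>C f) \<in> T" "x = G0 f" "y = G1 f"
        and g: "(g, l *\<^sub>C g) \<in> T" "x = G0 g" "z = G1 g" by (auto simp: weyl_mem)
      have "f = g" using ev_inj[OF l f(1) g(1)] f g by simp
      then show "y = z" using f g by simp
    qed
  qed
  show ?thesis
    using op dom D by (force simp: densely_defined_def weyl_mem)
qed

end



context chip
begin

lemma adj_add: "(y1, x1) \<in> adj ip ip D \<Longrightarrow> (y2, x2) \<in> adj ip ip D \<Longrightarrow> (y1 + y2, x1 + x2) \<in> adj ip ip D"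
  by (simp add: adj_mem add_right)
lemma adj_scale: "(y, x) \<in> adj ip ip D \<Longrightarrow> (c *\<^sub>C y, c *\<^sub>C x) \<in> adj ip ip D"
  by (simp add: adj_mem scale_right)

lemma surj_adj:
  assumes C: "C = adj ip ip D" and mu: "\<mu> \<in> resolvent_set C"
  shows "\<exists>k. (k, h + cnj \<mu> *\<^sub>C k) \<in> adj ip ip C"
proof -
  let ?R = "resolvent_op C \<mu>"
  have sv: "single_valued ?R" and dom: "Domain ?R = UNIV" and bd: "\<exists>Cb. \<forall>(x, y)\<in>?R. norm y \<le> Cb * norm x"
    using mu unfolding resolvent_set_def by blast+
  obtain Cb where Cb: "\<And>x y. (x, y) \<in> ?R \<Longrightarrow> norm y \<le> Cb * norm x" using bd by blast
  have "\<forall>w. \<exists>u. (w, u) \<in> ?R" using dom by blast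
  then obtain r where r: "\<And>w. (w, r w) \<in> ?R" by metis
  have rC: "(r w, w + \<mu> *\<^sub>C r w) \<in> C" for w using r[of w] by (simp add: res_mem)
  have r_eq: "(w, u) \<in> ?R \<Longrightarrow> r w = u" for w u using sv r unfolding single_valued_def by blast
  have r_add: "r (w1 + w2) = r w1 + r w2" for w1 w2
  proof -
    have "(r w1 + r w2, (w1 + \<mu> *\<^sub>C r w1) + (w2 + \<mu> *\<^sub>C r w2)) \<in> C"
      using adj_add[OF rC[of w1, unfolded C] rC[of w2, unfolded C]] C by simp
    then have "(w1 + w2, r w1 + r w2) \<in> ?R" by (simp add: res_mem scaleC_add_right algebra_simps)
    then show ?thesis by (rule r_eq)
  qed
  have r_scale: "r (c *\<^sub>C w) = c *\<^sub>C r w" for c w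
  proof -
    have "(c *\<^sub>C r w, c *\<^sub>C (w + \<mu> *\<^sub>C r w)) \<in> C"
      using adj_scale[OF rC[of w, unfolded C]] C by simp
    then have "(c *\<^sub>C w, c *\<^sub>C r w) \<in> ?R" by (simp add: res_mem scaleC_add_right scaleC_comm)
    then show ?thesis by (rule r_eq)
  qed
  define F where "F w = ip (r w) h" for w
  have "\<exists>k. \<forall>x. F x = ip x k"
  proof (rule riesz)
    show "F (x + y) = F x + F y" for x y by (simp add: F_def r_add add_left)
    show "F (c *\<^sub>C x) = c * F x" for c x by (simp add: F_def r_scale scale_left)
    show "cmod (F x) \<le> (Cb * norm h) * norm x" for x
    proof -
      have "cmod (F x) \<le> norm (r x) * norm h" unfolding F_def by (rule cauchy_schwarz)
      also have "\<dots> \<le> (Cb * norm x) * norm h" by (intro mult_right_mono Cb r) simp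
      finally show ?thesis by (simp add: algebra_simps)
    qed
  qed
  then obtain k where k: "\<And>w. ip (r w) h = ip w k" unfolding F_def by blast
  show ?thesis
  proof (intro exI[of _ k])
    show "(k, h + cnj \<mu> *\<^sub>C k) \<in> adj ip ip C"
      unfolding adj_mem
    proof (intro allI impI)
      fix u v assume uv: "(u, v) \<in> C"
      have "(v - \<mu> *\<^sub>C u, u) \<in> ?R" using uv by (simp add: res_mem)
      then have ru: "r (v - \<mu> *\<^sub>C u) = u" by (rule r_eq)
      have "ip v k = ip (v - \<mu> *\<^sub>C u) k + \<mu> * ip u k" by (simp add: diff_left scale_left)
      also have "\<dots> = ip u h + \<mu> * ip u k" using k[of "v - \<mu> *\<^sub>C u"] ru by simp
      also have "\<dots> = ip u (h + cnj \<mu> *\<^sub>C k)" by (simp add: add_right scale_right)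
      finally show "ip v k = ip u (h + cnj \<mu> *\<^sub>C k)" .
    qed
  qed
qed

end


locale btrip =
  fixes ipH :: "'h::{complex_normed_vector,complete_space} \<Rightarrow> 'h \<Rightarrow> complex"
    and ipG :: "'g::complex_normed_vector \<Rightarrow> 'g \<Rightarrow> complex"
    and T Tt :: "('h \<times> 'h) set"
    and G0 G1 Gt0 Gt1 :: "'h \<Rightarrow> 'g"
  assumes hH: "is_cinner ipH" and hG: "is_cinner ipG"
    and T_op: "is_op T" and Tt_op: "is_op Tt"
    and lin0: "clinear_on (Domain T) G0" and lin1: "clinear_on (Domain T) G1"
    and lint0: "clinear_on (Domain Tt) Gt0" and lint1: "clinear_on (Domain Tt) Gt1"
    and G: "\<forall>(f, Tf)\<in>T. \<forall>(g, Ttg)\<in>Tt.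
              ipH Tf g - ipH f Ttg = ipG (G1 f) (Gt0 g) - ipG (G0 f) (Gt1 g)"
    and D0: "closure (G0 ` Domain T) = UNIV" and Dt0: "closure (Gt0 ` Domain Tt) = UNIV"
    and Mc1: "adj ipH ipH (A0_of T G0) = A0_of Tt Gt0"
    and Mc2: "adj ipH ipH (A0_of Tt Gt0) = A0_of T G0"
begin

sublocale H: chip ipH by unfold_locales (rule hH)
sublocale GG: cip ipG by unfold_locales (rule hG)
sublocale W: wtrip T G0 G1 by unfold_locales (rule T_op, rule lin0, rule lin1)
sublocale Wt: wtrip Tt Gt0 Gt1 by unfold_locales (rule Tt_op, rule lint0, rule lint1)

abbreviation "M \<equiv> weyl_function T G0 G1"
abbreviation "Mt \<equiv> weyl_function Tt Gt0 Gt1"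
abbreviation "\<gamma> \<equiv> gamma_field T G0"
abbreviation "\<gamma>t \<equiv> gamma_field Tt Gt0"
abbreviation "A0 \<equiv> A0_of T G0"
abbreviation "At0 \<equiv> A0_of Tt Gt0"

lemma green: "(f, a) \<in> T \<Longrightarrow> (g, b) \<in> Tt \<Longrightarrow> ipH a g - ipH f b = ipG (G1 f) (Gt0 g) - ipG (G0 f) (Gt1 g)"
  using G by blast

lemma green_ev:
  assumes "(f, l *\<^sub>C f) \<in> T" "(g, m *\<^sub>C g) \<in> Tt"
  shows "(l - cnj m) * ipH f g = ipG (G1 f) (Gt0 g) - ipG (G0 f) (Gt1 g)"
  using green[OF assms] by (simp add: H.scale_left H.scale_right algebra_simps)

lemma green_ev':
  assumes "(f, l *\<^sub>C f) \<in> T" "(g, m *\<^sub>C g) \<in> Tt"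
  shows "cnj (l - cnj m) * ipH g f = ipG (Gt0 g) (G1 f) - ipG (Gt1 g) (G0 f)"
proof -
  have "cnj ((l - cnj m) * ipH f g) = cnj (ipG (G1 f) (Gt0 g) - ipG (G0 f) (Gt1 g))"
    using green_ev[OF assms] by simp
  then show ?thesis by (simp add: H.sym[of f g] GG.sym[of "G1 f"] GG.sym[of "G0 f"])
qed

lemma F6:
  assumes m: "m \<in> resolvent_set At0"
  shows "\<exists>y. (h, y) \<in> adj ipG ipH (\<gamma>t m)"
proof -
  obtain k where k: "(k, h + cnj m *\<^sub>C k) \<in> adj ipH ipH At0"
    using H.surj_adj[OF Mc1[symmetric] m] by blast
  then have kA: "(k, h + cnj m *\<^sub>C k) \<in> T" "G0 k = 0" using Mc2 by (auto simp: A0_mem)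
  show ?thesis
  proof (intro exI[of _ "G1 k"], unfold adj_mem, intro allI impI)
    fix u v assume "(u, v) \<in> \<gamma>t m"
    then have g: "(v, m *\<^sub>C v) \<in> Tt" "u = Gt0 v" by (auto simp: gamma_mem)
    have "ipH (h + cnj m *\<^sub>C k) v - ipH k (m *\<^sub>C v) = ipG (G1 k) u - ipG (G0 k) (Gt1 v)"
      using green[OF kA(1) g(1)] g(2) by simp
    then have "ipH h v = ipG (G1 k) u" using kA(2) by (simp add: H.add_left H.scale_left H.scale_right)
    then have "cnj (ipH h v) = cnj (ipG (G1 k) u)" by simp
    then show "ipH v h = ipG u (G1 k)" by (simp add: H.sym[of h v] GG.sym[of "G1 k" u])
  qed
qed

lemma F6':
  assumes l: "l \<in> resolvent_set A0"
  shows "\<exists>y. (h, y) \<in> adj ipG ipH (\<gamma> l)"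
proof -
  obtain k where k: "(k, h + cnj l *\<^sub>C k) \<in> adj ipH ipH A0"
    using H.surj_adj[OF Mc2[symmetric] l] by blast
  then have kA: "(k, h + cnj l *\<^sub>C k) \<in> Tt" "Gt0 k = 0" using Mc1 by (auto simp: A0_mem)
  show ?thesis
  proof (intro exI[of _ "Gt1 k"], unfold adj_mem, intro allI impI)
    fix u v assume "(u, v) \<in> \<gamma> l"
    then have f: "(v, l *\<^sub>C v) \<in> T" "u = G0 v" by (auto simp: gamma_mem)
    have "ipH (l *\<^sub>C v) k - ipH v (h + cnj l *\<^sub>C k) = ipG (G1 v) (Gt0 k) - ipG u (Gt1 k)"
      using green[OF f(1) kA(1)] f(2) by simp
    then show "ipH v h = ipG u (Gt1 k)" using kA(2) by (simp add: H.add_right H.scale_left H.scale_right)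
  qed
qed

lemma domM: "l \<in> resolvent_set A0 \<Longrightarrow> Domain (M l) = G0 ` Domain T"
  using W.weyl_i[OF _ D0] by blast
lemma domMt: "m \<in> resolvent_set At0 \<Longrightarrow> Domain (Mt m) = Gt0 ` Domain Tt"
  using Wt.weyl_i[OF _ Dt0] by blast

lemma denseM:
  assumes l: "l \<in> resolvent_set A0" and z: "\<And>f. (f, l *\<^sub>C f) \<in> T \<Longrightarrow> ipG (G0 f) z = 0"
  shows "z = 0"
proof (rule GG.dense_zero)
  show "closure (Domain (M l)) = UNIV" using domM[OF l] D0 by simp
  show "\<forall>d\<in>Domain (M l). ipG d z = 0" using z by (auto simp: weyl_mem)
qed

lemma denseMt:
  assumes m: "m \<in> resolvent_set At0" and z: "\<And>g. (g, m *\<^sub>C g) \<in> Tt \<Longrightarrow> ipG (Gt0 g) z = 0"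
  shows "z = 0"
proof (rule GG.dense_zero)
  show "closure (Domain (Mt m)) = UNIV" using domMt[OF m] Dt0 by simp
  show "\<forall>d\<in>Domain (Mt m). ipG d z = 0" using z by (auto simp: weyl_mem)
qed


lemma ii_ab: "M l \<subseteq> adj ipG ipG (Mt (cnj l)) \<and> Mt (cnj l) \<subseteq> adj ipG ipG (M l)"
proof (intro conjI subsetI)
  fix pq assume "pq \<in> M l"
  then obtain f where f: "(f, l *\<^sub>C f) \<in> T" "pq = (G0 f, G1 f)" by (cases pq) (auto simp: weyl_mem)
  show "pq \<in> adj ipG ipG (Mt (cnj l))"
    unfolding f(2) adj_mem
  proof (intro allI impI)
    fix u v assume "(u, v) \<in> Mt (cnj l)"
    then obtain g where g: "(g, cnj l *\<^sub>C g) \<in> Tt" "u = Gt0 g" "v = Gt1 g" by (auto simp: weyl_mem)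
    show "ipG v (G0 f) = ipG u (G1 f)" using green_ev'[OF f(1) g(1)] g by simp
  qed
next
  fix pq assume "pq \<in> Mt (cnj l)"
  then obtain g where g: "(g, cnj l *\<^sub>C g) \<in> Tt" "pq = (Gt0 g, Gt1 g)" by (cases pq) (auto simp: weyl_mem)
  show "pq \<in> adj ipG ipG (M l)"
    unfolding g(2) adj_mem
  proof (intro allI impI)
    fix u v assume "(u, v) \<in> M l"
    then obtain f where f: "(f, l *\<^sub>C f) \<in> T" "u = G0 f" "v = G1 f" by (auto simp: weyl_mem)
    show "ipG v (Gt0 g) = ipG u (Gt1 g)" using green_ev[OF f(1) g(1)] f by simp
  qed
qed

lemma op_minus_mem: "(p, q) \<in> op_minus A B \<longleftrightarrow> (\<exists>y z. (p, y) \<in> A \<and> (p, z) \<in> B \<and> q = y - z)"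
  unfolding op_minus_def by auto
lemma op_plus_mem: "(p, q) \<in> op_plus A B \<longleftrightarrow> (\<exists>y z. (p, y) \<in> A \<and> (p, z) \<in> B \<and> q = y + z)"
  unfolding op_plus_def by auto
lemma op_scale_mem: "(p, q) \<in> op_scale c A \<longleftrightarrow> (\<exists>y. (p, y) \<in> A \<and> q = c *\<^sub>C y)"
  unfolding op_scale_def by auto
lemma op_comp_mem: "(p, q) \<in> op_comp B A \<longleftrightarrow> (\<exists>y. (p, y) \<in> A \<and> (y, q) \<in> B)"
  unfolding op_comp_def by auto
lemma X_mem: "(p, w) \<in> op_comp (op_plus op_id (op_scale c R)) A \<longleftrightarrow> (\<exists>f0 k. (p, f0) \<in> A \<and> (f0, k) \<in> R \<and> w = f0 + c *\<^sub>C k)"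
  unfolding op_comp_def op_plus_def op_id_def op_scale_def by auto

lemma ii_c:
  assumes l: "l \<in> resolvent_set A0" and m: "m \<in> resolvent_set At0"
  shows "op_minus (M l) (adj ipG ipG (Mt m)) = op_scale (l - cnj m) (op_comp (adj ipG ipH (\<gamma>t m)) (\<gamma> l))"
    (is "?L = ?R")
proof (intro set_eqI iffI)
  fix pq assume "pq \<in> ?L"
  then obtain p q where pq: "pq = (p, q)" by (cases pq)
  with \<open>pq \<in> ?L\<close> obtain y1 x where y1: "(p, y1) \<in> M l" and x: "(p, x) \<in> adj ipG ipG (Mt m)" and q: "q = y1 - x"
    by (auto simp: op_minus_mem)
  from y1 obtain f where f: "(f, l *\<^sub>C f) \<in> T" "p = G0 f" "y1 = G1 f" by (auto simp: weyl_mem)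
  obtain y where y: "(f, y) \<in> adj ipG ipH (\<gamma>t m)" using F6[OF m] by blast
  have "q - (l - cnj m) *\<^sub>C y = 0"
  proof (rule denseMt[OF m])
    fix g assume g: "(g, m *\<^sub>C g) \<in> Tt"
    have "(Gt0 g, Gt1 g) \<in> Mt m" using g by (auto simp: weyl_mem)
    then have e1: "ipG (Gt1 g) p = ipG (Gt0 g) x" using x by (simp add: adj_mem)
    have "(Gt0 g, g) \<in> \<gamma>t m" using g by (simp add: gamma_mem)
    then have e2: "ipH g f = ipG (Gt0 g) y" using y by (simp add: adj_mem)
    show "ipG (Gt0 g) (q - (l - cnj m) *\<^sub>C y) = 0"
      using green_ev'[OF f(1) g] e1 e2 f q by (simp add: GG.diff_right GG.scale_right)
  qed
  then have "q = (l - cnj m) *\<^sub>C y" by simp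
  then show "pq \<in> ?R" using pq f y by (auto simp: op_scale_mem op_comp_mem gamma_mem)
next
  fix pq assume "pq \<in> ?R"
  then obtain p q where pq: "pq = (p, q)" by (cases pq)
  with \<open>pq \<in> ?R\<close> obtain f y where f: "(f, l *\<^sub>C f) \<in> T" "p = G0 f" and y: "(f, y) \<in> adj ipG ipH (\<gamma>t m)"
     and q: "q = (l - cnj m) *\<^sub>C y"
    by (auto simp: op_scale_mem op_comp_mem gamma_mem)
  define x where "x = G1 f - (l - cnj m) *\<^sub>C y"
  have "(p, x) \<in> adj ipG ipG (Mt m)"
    unfolding adj_mem
  proof (intro allI impI)
    fix u v assume "(u, v) \<in> Mt m"
    then obtain g where g: "(g, m *\<^sub>C g) \<in> Tt" "u = Gt0 g" "v = Gt1 g" by (auto simp: weyl_mem)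
    have "(Gt0 g, g) \<in> \<gamma>t m" using g by (simp add: gamma_mem)
    then have e2: "ipH g f = ipG (Gt0 g) y" using y by (simp add: adj_mem)
    show "ipG v p = ipG u x"
      using green_ev'[OF f(1) g(1)] e2 f g unfolding x_def by (simp add: GG.diff_right GG.scale_right)
  qed
  moreover have "(p, G1 f) \<in> M l" using f by (auto simp: weyl_mem)
  ultimately show "pq \<in> ?L" using pq q x_def by (force simp: op_minus_mem)
qed

lemma ii_d:
  assumes l: "l \<in> resolvent_set A0" and m: "m \<in> resolvent_set At0"
  shows "op_minus (adj ipG ipG (M l)) (Mt m) = op_scale (cnj l - m) (op_comp (adj ipG ipH (\<gamma> l)) (\<gamma>t m))"
    (is "?L = ?R")
proof (intro set_eqI iffI)
  fix pq assume "pq \<in> ?L"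
  then obtain p q where pq: "pq = (p, q)" by (cases pq)
  with \<open>pq \<in> ?L\<close> obtain x y1 where x: "(p, x) \<in> adj ipG ipG (M l)" and y1: "(p, y1) \<in> Mt m" and q: "q = x - y1"
    by (auto simp: op_minus_mem)
  from y1 obtain g where g: "(g, m *\<^sub>C g) \<in> Tt" "p = Gt0 g" "y1 = Gt1 g" by (auto simp: weyl_mem)
  obtain y where y: "(g, y) \<in> adj ipG ipH (\<gamma> l)" using F6'[OF l] by blast
  have "q - (cnj l - m) *\<^sub>C y = 0"
  proof (rule denseM[OF l])
    fix f assume f: "(f, l *\<^sub>C f) \<in> T"
    have "(G0 f, G1 f) \<in> M l" using f by (auto simp: weyl_mem)
    then have e1: "ipG (G1 f) p = ipG (G0 f) x" using x by (simp add: adj_mem)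
    have "(G0 f, f) \<in> \<gamma> l" using f by (simp add: gamma_mem)
    then have e2: "ipH f g = ipG (G0 f) y" using y by (simp add: adj_mem)
    show "ipG (G0 f) (q - (cnj l - m) *\<^sub>C y) = 0"
      using green_ev[OF f g(1)] e1 e2 g q by (simp add: GG.diff_right GG.scale_right)
  qed
  then have "q = (cnj l - m) *\<^sub>C y" by simp
  then show "pq \<in> ?R" using pq g y by (auto simp: op_scale_mem op_comp_mem gamma_mem)
next
  fix pq assume "pq \<in> ?R"
  then obtain p q where pq: "pq = (p, q)" by (cases pq)
  with \<open>pq \<in> ?R\<close> obtain g y where g: "(g, m *\<^sub>C g) \<in> Tt" "p = Gt0 g" and y: "(g, y) \<in> adj ipG ipH (\<gamma> l)"
     and q: "q = (cnj l - m) *\<^sub>C y"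
    by (auto simp: op_scale_mem op_comp_mem gamma_mem)
  define x where "x = Gt1 g + (cnj l - m) *\<^sub>C y"
  have "(p, x) \<in> adj ipG ipG (M l)"
    unfolding adj_mem
  proof (intro allI impI)
    fix u v assume "(u, v) \<in> M l"
    then obtain f where f: "(f, l *\<^sub>C f) \<in> T" "u = G0 f" "v = G1 f" by (auto simp: weyl_mem)
    have "(G0 f, f) \<in> \<gamma> l" using f by (simp add: gamma_mem)
    then have e2: "ipH f g = ipG (G0 f) y" using y by (simp add: adj_mem)
    show "ipG v p = ipG u x"
      using green_ev[OF f(1) g(1)] e2 f g unfolding x_def by (simp add: GG.add_right GG.scale_right)
  qed
  moreover have "(p, Gt1 g) \<in> Mt m" using g by (auto simp: weyl_mem)
  ultimately show "pq \<in> ?L" using pq q x_def by (force simp: op_minus_mem)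
qed


lemma shift:
  assumes f0: "(p, f0) \<in> \<gamma> l0" and k: "(f0, k) \<in> resolvent_op A0 l"
  shows "(f0 + (l - l0) *\<^sub>C k, l *\<^sub>C (f0 + (l - l0) *\<^sub>C k)) \<in> T \<and> G0 (f0 + (l - l0) *\<^sub>C k) = p"
proof -
  have f0': "(f0, l0 *\<^sub>C f0) \<in> T" "p = G0 f0" using f0 by (auto simp: gamma_mem)
  have k': "(k, f0 + l *\<^sub>C k) \<in> T" "G0 k = 0" using k by (auto simp: res_mem A0_mem)
  have "(f0 + (l - l0) *\<^sub>C k, l0 *\<^sub>C f0 + (l - l0) *\<^sub>C (f0 + l *\<^sub>C k)) \<in> T"
    by (intro W.add f0'(1) W.scale k'(1))
  moreover have "l0 *\<^sub>C f0 + (l - l0) *\<^sub>C (f0 + l *\<^sub>C k) = l *\<^sub>C (f0 + (l - l0) *\<^sub>C k)"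
  proof -
    have a: "l0 *\<^sub>C f0 + (l - l0) *\<^sub>C f0 = l *\<^sub>C f0" using scaleC_add_left[of l0 "l - l0" f0] by simp
    have b: "(l - l0) *\<^sub>C (l *\<^sub>C k) = l *\<^sub>C ((l - l0) *\<^sub>C k)" by (rule scaleC_comm)
    show ?thesis using a b by (simp add: scaleC_add_right add.assoc[symmetric])
  qed
  moreover have "G0 (f0 + (l - l0) *\<^sub>C k) = p"
  proof -
    have "k \<in> Domain T" "f0 \<in> Domain T" using k'(1) f0'(1) by blast+
    moreover then have "(l - l0) *\<^sub>C k \<in> Domain T" using W.scale by blast
    ultimately show ?thesis using W.lin_add[OF lin0] W.lin_scale[OF lin0] k'(2) f0'(2) by simp
  qed
  ultimately show ?thesis by simp
qed

lemma iii:
  assumes l0: "l0 \<in> resolvent_set A0" "l0 \<in> resolvent_set At0" and l: "l \<in> resolvent_set A0"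
  shows "M l = op_plus (adj ipG ipG (Mt l0))
               (op_comp (adj ipG ipH (\<gamma>t l0))
                 (op_scale (l - cnj l0)
                   (op_comp (op_plus op_id (op_scale (l - l0) (resolvent_op A0 l))) (\<gamma> l0))))"
    (is "?L = ?R")
proof (intro set_eqI iffI)
  fix pq assume "pq \<in> ?L"
  then obtain f where f: "(f, l *\<^sub>C f) \<in> T" "pq = (G0 f, G1 f)" by (cases pq) (auto simp: weyl_mem)
  define p where "p = G0 f"
  obtain f0 where f0: "(f0, l0 *\<^sub>C f0) \<in> T" "G0 f0 = p"
    using W.decomp[OF l0(1) f(1)] p_def by blast
  then have f0g: "(p, f0) \<in> \<gamma> l0" by (simp add: gamma_mem)
  have "Domain (resolvent_op A0 l) = UNIV" using l unfolding resolvent_set_def by blast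
  then obtain k where k: "(f0, k) \<in> resolvent_op A0 l" by blast
  have sh: "(f0 + (l - l0) *\<^sub>C k, l *\<^sub>C (f0 + (l - l0) *\<^sub>C k)) \<in> T" "G0 (f0 + (l - l0) *\<^sub>C k) = p"
    using shift[OF f0g k] by blast+
  have ff: "f0 + (l - l0) *\<^sub>C k = f" using W.ev_inj[OF l sh(1) f(1)] sh(2) p_def by simp
  obtain y where y: "((l - cnj l0) *\<^sub>C f, y) \<in> adj ipG ipH (\<gamma>t l0)" using F6[OF l0(2)] by blast
  define x where "x = G1 f - y"
  have "(p, x) \<in> adj ipG ipG (Mt l0)"
    unfolding adj_mem
  proof (intro allI impI)
    fix u v assume "(u, v) \<in> Mt l0"
    then obtain g where g: "(g, l0 *\<^sub>C g) \<in> Tt" "u = Gt0 g" "v = Gt1 g" by (auto simp: weyl_mem)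
    have "(Gt0 g, g) \<in> \<gamma>t l0" using g by (simp add: gamma_mem)
    then have e2: "ipH g ((l - cnj l0) *\<^sub>C f) = ipG (Gt0 g) y" using y by (simp add: adj_mem)
    have "ipG (Gt0 g) y = ipG (Gt0 g) (G1 f) - ipG (Gt1 g) (G0 f)"
      using green_ev'[OF f(1) g(1)] e2 by (simp add: H.scale_right)
    then show "ipG v p = ipG u x"
      using g p_def unfolding x_def by (simp add: GG.diff_right)
  qed
  moreover have "(p, y) \<in> op_comp (adj ipG ipH (\<gamma>t l0))
                 (op_scale (l - cnj l0) (op_comp (op_plus op_id (op_scale (l - l0) (resolvent_op A0 l))) (\<gamma> l0)))"
  proof -
    have "(p, f) \<in> op_comp (op_plus op_id (op_scale (l - l0) (resolvent_op A0 l))) (\<gamma> l0)"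
      unfolding X_mem using f0g k ff by blast
    then show ?thesis unfolding op_comp_mem[of _ _ "adj ipG ipH (\<gamma>t l0)"] op_scale_mem using y by blast
  qed
  moreover have "pq = (p, x + y)" using f(2) p_def x_def by simp
  ultimately show "pq \<in> ?R" by (simp only: op_plus_mem) blast
next
  fix pq assume "pq \<in> ?R"
  then obtain p q where pq: "pq = (p, q)" by (cases pq)
  with \<open>pq \<in> ?R\<close> have pqR: "(p, q) \<in> ?R" by simp
  then obtain x y where x: "(p, x) \<in> adj ipG ipG (Mt l0)" and q: "q = x + y"
    and py: "(p, y) \<in> op_comp (adj ipG ipH (\<gamma>t l0))
                 (op_scale (l - cnj l0) (op_comp (op_plus op_id (op_scale (l - l0) (resolvent_op A0 l))) (\<gamma> l0)))"
    by (simp only: op_plus_mem) blast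
  then obtain w where pw: "(p, w) \<in> op_scale (l - cnj l0) (op_comp (op_plus op_id (op_scale (l - l0) (resolvent_op A0 l))) (\<gamma> l0))"
    and wy: "(w, y) \<in> adj ipG ipH (\<gamma>t l0)"
    by (simp only: op_comp_mem[of _ _ "adj ipG ipH (\<gamma>t l0)"]) blast
  then obtain f' where pf': "(p, f') \<in> op_comp (op_plus op_id (op_scale (l - l0) (resolvent_op A0 l))) (\<gamma> l0)"
    and w: "w = (l - cnj l0) *\<^sub>C f'"
    by (simp only: op_scale_mem) blast
  then obtain f0 k where f0g: "(p, f0) \<in> \<gamma> l0" and k: "(f0, k) \<in> resolvent_op A0 l"
    and f': "f' = f0 + (l - l0) *\<^sub>C k"
    by (simp only: X_mem) blast
  have y: "((l - cnj l0) *\<^sub>C (f0 + (l - l0) *\<^sub>C k), y) \<in> adj ipG ipH (\<gamma>t l0)"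
    using wy w f' by simp
  define f where "f = f0 + (l - l0) *\<^sub>C k"
  have sh: "(f, l *\<^sub>C f) \<in> T" "G0 f = p" using shift[OF f0g k] f_def by blast+
  have "x + y - G1 f = 0"
  proof (rule denseMt[OF l0(2)])
    fix g assume g: "(g, l0 *\<^sub>C g) \<in> Tt"
    have "(Gt0 g, Gt1 g) \<in> Mt l0" using g by (auto simp: weyl_mem)
    then have e1: "ipG (Gt1 g) p = ipG (Gt0 g) x" using x by (simp add: adj_mem)
    have "(Gt0 g, g) \<in> \<gamma>t l0" using g by (simp add: gamma_mem)
    then have e2: "ipH g ((l - cnj l0) *\<^sub>C f) = ipG (Gt0 g) y" using y f_def by (simp add: adj_mem)
    show "ipG (Gt0 g) (x + y - G1 f) = 0"
      using green_ev'[OF sh(1) g] e1 e2 sh(2) by (simp add: GG.diff_right GG.add_right H.scale_right)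
        (metis add.commute diff_add_cancel)
  qed
  then have "q = G1 f" using q by simp
  then show "pq \<in> ?L" using pq sh by (auto simp: weyl_mem)
qed

end

lemma btrip_swap:
  assumes "btrip ipH ipG T Tt G0 G1 Gt0 Gt1"
  shows "btrip ipH ipG Tt T Gt0 Gt1 G0 G1"
proof -
  interpret btrip ipH ipG T Tt G0 G1 Gt0 Gt1 by (rule assms)
  show ?thesis
  proof (unfold_locales)
    show "\<forall>(g, a)\<in>Tt. \<forall>(f, b)\<in>T. ipH a f - ipH g b = ipG (Gt1 g) (G0 f) - ipG (Gt0 g) (G1 f)"
    proof (clarify)
      fix g a f b assume ga: "(g, a) \<in> Tt" and fb: "(f, b) \<in> T"
      have "cnj (ipH b g - ipH f a) = cnj (ipG (G1 f) (Gt0 g) - ipG (G0 f) (Gt1 g))"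
        using green[OF fb ga] by simp
      then have "ipH g b - ipH a f = ipG (Gt0 g) (G1 f) - ipG (Gt1 g) (G0 f)"
        by (simp add: H.sym[of b g] H.sym[of f a] GG.sym[of "G1 f"] GG.sym[of "G0 f"])
      then show "ipH a f - ipH g b = ipG (Gt1 g) (G0 f) - ipG (Gt0 g) (G1 f)"
        by (simp add: algebra_simps)
    qed
  qed (use hH hG T_op Tt_op lin0 lin1 lint0 lint1 D0 Dt0 Mc1 Mc2 in auto)
qed


theorem proposition3p4:
  fixes ipH :: "'h::{complex_normed_vector,complete_space} \<Rightarrow> 'h \<Rightarrow> complex"
    and ipG :: "'g::{complex_normed_vector,complete_space} \<Rightarrow> 'g \<Rightarrow> complex"
    and S St T Tt :: "('h \<times> 'h) set"
    and \<Gamma>0 \<Gamma>1 \<Gamma>t0 \<Gamma>t1 :: "'h \<Rightarrow> 'g"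
    and A0 At0 :: "('h \<times> 'h) set"
    and \<gamma> \<gamma>t :: "complex \<Rightarrow> ('g \<times> 'h) set"
    and M Mt :: "complex \<Rightarrow> ('g \<times> 'g) set"
  assumes hilbH: "is_cinner ipH" and sepH: "separable_type TYPE('h)"
    and hilbG: "is_cinner ipG"
    and S_cl: "closed_op S" and St_cl: "closed_op St"
    and S_dd: "densely_defined S" and St_dd: "densely_defined St"
    and adj_pair: "\<forall>(f, Sf)\<in>S. \<forall>(g, Stg)\<in>St. ipH Sf g = ipH f Stg"
    and T_op: "is_op T" and Tt_op: "is_op Tt"
    and T_sub: "T \<subseteq> adj ipH ipH S" and T_core: "closure T = adj ipH ipH S"
    and Tt_sub: "Tt \<subseteq> adj ipH ipH St" and Tt_core: "closure Tt = adj ipH ipH St"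
    and lin: "clinear_on (Domain T) \<Gamma>0" "clinear_on (Domain T) \<Gamma>1"
             "clinear_on (Domain Tt) \<Gamma>t0" "clinear_on (Domain Tt) \<Gamma>t1"
    and G: "\<forall>(f, Tf)\<in>T. \<forall>(g, Ttg)\<in>Tt.
              ipH Tf g - ipH f Ttg = ipG (\<Gamma>1 f) (\<Gamma>t0 g) - ipG (\<Gamma>0 f) (\<Gamma>t1 g)"
    and D: "closure (\<Gamma>0 ` Domain T) = UNIV" "closure (\<Gamma>t0 ` Domain Tt) = UNIV"
    and A0_def: "A0 = A0_of T \<Gamma>0" and At0_def: "At0 = A0_of Tt \<Gamma>t0"
    and Mcond: "adj ipH ipH A0 = At0" "adj ipH ipH At0 = A0"
    and rho: "resolvent_set A0 \<noteq> {}"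
    and \<gamma>_def: "\<gamma> = gamma_field T \<Gamma>0" and \<gamma>t_def: "\<gamma>t = gamma_field Tt \<Gamma>t0"
    and M_def: "M = weyl_function T \<Gamma>0 \<Gamma>1" and Mt_def: "Mt = weyl_function Tt \<Gamma>t0 \<Gamma>t1"
  shows
   "(\<forall>l\<in>resolvent_set A0. \<forall>m\<in>resolvent_set At0.
      \<comment> \<open>(i)\<close>
      (is_op (M l) \<and> is_op (Mt m) \<and>
       Domain (M l) = \<Gamma>0 ` Domain T \<and> Domain (Mt m) = \<Gamma>t0 ` Domain Tt \<and>
       densely_defined (M l) \<and> densely_defined (Mt m) \<and>
       Range (M l) \<subseteq> \<Gamma>1 ` Domain T \<and> Range (Mt m) \<subseteq> \<Gamma>t1 ` Domain Tt) \<and>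
      \<comment> \<open>(ii)\<close>
      (M l \<subseteq> adj ipG ipG (Mt (cnj l)) \<and> Mt (cnj l) \<subseteq> adj ipG ipG (M l) \<and>
       op_minus (M l) (adj ipG ipG (Mt m))
         = op_scale (l - cnj m) (op_comp (adj ipG ipH (\<gamma>t m)) (\<gamma> l)) \<and>
       op_minus (adj ipG ipG (M l)) (Mt m)
         = op_scale (cnj l - m) (op_comp (adj ipG ipH (\<gamma> l)) (\<gamma>t m)))) \<and>
    \<comment> \<open>(iii)\<close>
    (\<forall>l0\<in>resolvent_set A0 \<inter> resolvent_set At0. \<forall>l\<in>resolvent_set A0.
       M l = op_plus (adj ipG ipG (Mt l0))
               (op_comp (adj ipG ipH (\<gamma>t l0))
                 (op_scale (l - cnj l0)
                   (op_comp (op_plus op_id (op_scale (l - l0) (resolvent_op A0 l))) (\<gamma> l0))))) \<and>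
    (\<forall>m0\<in>resolvent_set A0 \<inter> resolvent_set At0. \<forall>m\<in>resolvent_set At0.
       Mt m = op_plus (adj ipG ipG (M m0))
               (op_comp (adj ipG ipH (\<gamma> m0))
                 (op_scale (m - cnj m0)
                   (op_comp (op_plus op_id (op_scale (m - m0) (resolvent_op At0 m))) (\<gamma>t m0)))))"
proof -
  interpret B: btrip ipH ipG T Tt \<Gamma>0 \<Gamma>1 \<Gamma>t0 \<Gamma>t1
    by unfold_locales (use hilbH hilbG T_op Tt_op lin G D Mcond A0_def At0_def in auto)
  have sw: "btrip ipH ipG Tt T \<Gamma>t0 \<Gamma>t1 \<Gamma>0 \<Gamma>1" by (rule btrip_swap) unfold_locales
  interpret B': btrip ipH ipG Tt T \<Gamma>t0 \<Gamma>t1 \<Gamma>0 \<Gamma>1 by (rule sw)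
  show ?thesis
    unfolding M_def Mt_def \<gamma>_def \<gamma>t_def A0_def At0_def
    apply (intro conjI ballI)
    subgoal using B.W.weyl_i[OF _ D(1)] by blast
    subgoal using B.Wt.weyl_i[OF _ D(2)] by blast
    subgoal using B.W.weyl_i[OF _ D(1)] by blast
    subgoal using B.Wt.weyl_i[OF _ D(2)] by blast
    subgoal using B.W.weyl_i[OF _ D(1)] by blast
    subgoal using B.Wt.weyl_i[OF _ D(2)] by blast
    subgoal using B.W.weyl_i[OF _ D(1)] by blast
    subgoal using B.Wt.weyl_i[OF _ D(2)] by blast
    subgoal using B.ii_ab by blast
    subgoal using B.ii_ab by blast
    apply (rule B.ii_c; assumption)
    apply (rule B.ii_d; assumption)
    apply (rule B.iii; simp)
    apply (rule B'.iii; simp)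
    done
qed

end
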